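(* Let $\ell$ be a finite linear order with $|\ell|\ge2$, $\mathscr T$ a Schröder tree on $\ell$ enriched with connected graphs, with root $r$ and $g=\bigvee\mathscr T$. Suppose that for every internal vertex $w\neq r$ of $\mathscr T$ the graph $g_{\ell_w}$ is $r_w$-regular. Then $$\phi_g(x,t)=\Big(\prod_{w\in\mathrm{Iv}(\mathscr T),\,w\neq r}\frac{\phi_{(a_w,g_w)}(x+tN_{rw},t)}{x-r_w+t(r_w+N_{rw})}\Big)\,\phi_{(a_r,g_r)}(x,t).$$
   Context: All graphs finite and simple. $\phi_g(x,t)=\det\big(xI-(A(g)-tD(g))\big)$ with $A$ adjacency and $D$ diagonal degree matrix. Generalized composition: for a segmented partition $\pi=(\ell_1,\dots,\ell_k)$ of $\ell$ (nonempty consecutive segments whose concatenation is $\ell$), graphs $g_{\ell_j}$ on $\ell_j$ and a graph $h$ on $\pi$, $\bigvee_h(g_{\ell_1},\dots,g_{\ell_k})$ has vertex set $\ell$ and edges those of the $g_{\ell_j}$ plus all $\{x,y\}$, $x\in\ell_i,y\in\ell_j$, $\{\ell_i,\ell_j\}\in E(h)$. Graph-enriched Schröder tree on $\ell$: rooted plane tree with leaves the elements of $\ell$ left to right, each internal vertex having at least two children, with a graph $g_v$ on $\pi_v=(\ell_{v_1},\dots,\ell_{v_k})$ for each internal $v$ (children $v_1,\dots,v_k$ left to right, $\ell_u$ the leaves below $u$); enriched with connected graphs means every $g_v$ is connected. $\bigvee$ of a leaf is the one-vertex graph and $\bigvee\mathscr T=\bigvee_{g_r}(\bigvee\mathscr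 T_{r_1},\dots,\bigvee\mathscr T_{r_k})$ ($\mathscr T_u$ subtree at $u$); $g_{\ell_u}=\bigvee\mathscr T_u$; $a_v=(g_{\ell_{v_1}},\dots,g_{\ell_{v_k}})$. For internal $v$, with $n_i=|\ell_{v_i}|$, $\rho_i=\mathrm{reg}(g_{\ell_{v_i}})$ and $N_i=\sum_{s:\{\ell_{v_s},\ell_{v_i}\}\in E(g_v)}n_s$: $A(a_v,g_v)$ is the $k\times k$ matrix with diagonal $\rho_i$ and $(i,j)$ entry ($i\neq j$) $\sqrt{n_in_j}$ if $\{\ell_{v_i},\ell_{v_j}\}\in E(g_v)$, else $0$; $D(a_v,g_v)=\mathrm{diag}(\rho_i+N_i)$; $\phi_{(a_v,g_v)}(x,t)=\det\big(xI_k-(A(a_v,g_v)-tD(a_v,g_v))\big)$. For non-root internal $w$ with parent $u$, $N_w=\sum_{x:\{\ell_x,\ell_w\}\in E(g_u)}|\ell_x|$, and $N_{rw}=N_{w_1}+\cdots+N_{w_m}$ along the path $r=w_0,w_1,\dots,w_m=w$. *)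

theory Defs
  imports Complex_Main "Jordan_Normal_Form.Determinant"
begin

definition simple_graph :: "'v set \<Rightarrow> 'v set set \<Rightarrow> bool" where
  "simple_graph V E \<longleftrightarrow> E \<subseteq> {e. \<exists>x y. x \<in> V \<and> y \<in> V \<and> x \<noteq> y \<and> e = {x, y}}"

definition connected_graph :: "'v set \<Rightarrow> 'v set set \<Rightarrow> bool" where
  "connected_graph V E \<longleftrightarrow> V \<noteq> {} \<and>
     (\<forall>x\<in>V. \<forall>y\<in>V. (x, y) \<in> {(u, w). {u, w} \<in> E}\<^sup>*)"

definition deg :: "'v set set \<Rightarrow> 'v \<Rightarrow> nat" where
  "deg E v = card {u. {u, v} \<in> E}"

definition regular :: "'v set \<Rightarrow> 'v set set \<Rightarrow> nat \<Rightarrow> bool" where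
  "regular V E r \<longleftrightarrow> (\<forall>v\<in>V. deg E v = r)"

definition reg :: "'v set \<Rightarrow> 'v set set \<Rightarrow> nat" where
  "reg V E = (THE r. regular V E r)"

definition phi_graph :: "'v::linorder set \<Rightarrow> 'v set set \<Rightarrow> real \<Rightarrow> real \<Rightarrow> real" where
  "phi_graph V E x t =
    (let vs = sorted_list_of_set V; n = length vs;
         A = mat n n (\<lambda>(i, j). if {vs ! i, vs ! j} \<in> E then 1 else 0);
         D = mat n n (\<lambda>(i, j). if i = j then real (deg E (vs ! i)) else 0)
     in det (x \<cdot>\<^sub>m 1\<^sub>m n - (A - t \<cdot>\<^sub>m D)))"

text \<open>A leaf carries its element of the
  linear order; an internal vertex carries a graph on the positions 0..k-1 of its
  k children (position i standing for the segment of leaves below the i-th child).\<close>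

datatype 'a stree = Leaf 'a | Node "nat set set" "'a stree list"

fun leaves :: "'a stree \<Rightarrow> 'a list" where
  "leaves (Leaf a) = [a]"
| "leaves (Node E ts) = concat (map leaves ts)"

fun wf_conn :: "'a stree \<Rightarrow> bool" where
  "wf_conn (Leaf a) = True"
| "wf_conn (Node E ts) = (2 \<le> length ts \<and> simple_graph {..<length ts} E \<and>
       connected_graph {..<length ts} E \<and> list_all wf_conn ts)"

fun compose :: "'a stree \<Rightarrow> 'a set set" where
  "compose (Leaf a) = {}"
| "compose (Node E ts) = \<Union> (set (map compose ts)) \<union>
     {{x, y} | x y i j. {i, j} \<in> E \<and> i < length ts \<and> j < length ts \<and>
         x \<in> set (leaves (ts ! i)) \<and> y \<in> set (leaves (ts ! j))}"

fun subt :: "'a stree \<Rightarrow> nat list \<Rightarrow> 'a stree option" where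
  "subt t [] = Some t"
| "subt t (i # p) = (case t of Leaf a \<Rightarrow> None
     | Node E ts \<Rightarrow> if i < length ts then subt (ts ! i) p else None)"

definition internal :: "'a stree \<Rightarrow> nat list set" where
  "internal T = {p. \<exists>E ts. subt T p = Some (Node E ts)}"

text \<open>reg of the graph g_{l_u} = composition of the subtree at u.\<close>
definition treg :: "'a stree \<Rightarrow> nat" where
  "treg t = reg (set (leaves t)) (compose t)"

definition Nchild :: "nat set set \<Rightarrow> 'a stree list \<Rightarrow> nat \<Rightarrow> nat" where
  "Nchild E ts i = (\<Sum>j\<in>{j. j < length ts \<and> {j, i} \<in> E}. length (leaves (ts ! j)))"

definition node_A :: "nat set set \<Rightarrow> 'a stree list \<Rightarrow> real mat" where
  "node_A E ts = mat (length ts) (length ts) (\<lambda>(i, j).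
     if i = j then real (treg (ts ! i))
     else if {i, j} \<in> E then sqrt (real (length (leaves (ts ! i))) * real (length (leaves (ts ! j))))
     else 0)"

definition node_D :: "nat set set \<Rightarrow> 'a stree list \<Rightarrow> real mat" where
  "node_D E ts = mat (length ts) (length ts) (\<lambda>(i, j).
     if i = j then real (treg (ts ! i) + Nchild E ts i) else 0)"

definition phi_node :: "nat set set \<Rightarrow> 'a stree list \<Rightarrow> real \<Rightarrow> real \<Rightarrow> real" where
  "phi_node E ts x t =
     det (x \<cdot>\<^sub>m 1\<^sub>m (length ts) - (node_A E ts - t \<cdot>\<^sub>m node_D E ts))"

definition phi_at :: "'a stree \<Rightarrow> nat list \<Rightarrow> real \<Rightarrow> real \<Rightarrow> real" where
  "phi_at T p x t = (case subt T p of Some (Node E ts) \<Rightarrow> phi_node E ts x t | _ \<Rightarrow> 0)"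

definition Nw :: "'a stree \<Rightarrow> nat list \<Rightarrow> nat" where
  "Nw T p = (case subt T (butlast p) of Some (Node E ts) \<Rightarrow> Nchild E ts (last p) | _ \<Rightarrow> 0)"

definition Nrw :: "'a stree \<Rightarrow> nat list \<Rightarrow> nat" where
  "Nrw T p = (\<Sum>k\<in>{1..length p}. Nw T (take k p))"

definition rw :: "'a stree \<Rightarrow> nat list \<Rightarrow> nat" where
  "rw T p = (case subt T p of Some u \<Rightarrow> treg u | None \<Rightarrow> 0)"

end

theory Submission
  imports Defs
begin

lemma prod_list_ones: "(\<And>i. i < n \<Longrightarrow> f i = 1) \<Longrightarrow> prod_list (map f [0..<n]) = (1::real)"
  by (induction n) auto

lemma core_det:
  fixes X :: "real mat"
  assumes X: "X \<in> carrier_mat n n" and m1: "1 \<le> m" and mn: "m \<le> n"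
    and rs: "\<forall>r<m. (\<Sum>v = 0..<m. X $$ (r, v)) = s"
    and cc: "\<forall>r<m. \<forall>c. m \<le> c \<longrightarrow> c < n \<longrightarrow> X $$ (r, c) = X $$ (m - 1, c)"
  shows "det X = det (mat (m - 1) (m - 1) (\<lambda>(r, c). X $$ (r, c) - X $$ (m - 1, c))) *
     det (mat (n - m + 1) (n - m + 1) (\<lambda>(r, c). if c = 0 then (\<Sum>v = 0..<m. X $$ (r + m - 1, v))
        else X $$ (r + m - 1, c + m - 1)))"
proof -
  define P :: "real mat" where "P = mat n n (\<lambda>(v, c). if v = c then 1 else if c = m - 1 \<and> v < m then 1 else 0)"
  define L :: "real mat" where "L = mat n n (\<lambda>(r, u). if r = u then 1 else if r < m - 1 \<and> u = m - 1 then -1 else 0)"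
  define Y where "Y = (\<lambda>u c. if c = m - 1 then (\<Sum>v = 0..<m. X $$ (u, v)) else X $$ (u, c))"
  have Pc: "P \<in> carrier_mat n n" and Lc: "L \<in> carrier_mat n n" unfolding P_def L_def by auto
  have dP: "det P = 1"
    by (subst det_upper_triangular[OF _ Pc]) (auto simp: P_def upper_triangular_def diag_mat_def intro!: prod_list_ones)
  have dL: "det L = 1"
    by (subst det_upper_triangular[OF _ Lc]) (auto simp: L_def upper_triangular_def diag_mat_def intro!: prod_list_ones)
  have XP: "(X * P) $$ (u, c) = Y u c" if "u < n" "c < n" for u c
  proof -
    have "(X * P) $$ (u, c) = (\<Sum>v = 0..<n. X $$ (u, v) * P $$ (v, c))"
      using that X Pc by (simp add: scalar_prod_def)
    also have "\<dots> = Y u c"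
    proof (cases "c = m - 1")
      case True
      have "(\<Sum>v = 0..<n. X $$ (u, v) * P $$ (v, c)) = (\<Sum>v = 0..<n. if v < m then X $$ (u, v) else 0)"
        using True that m1 by (intro sum.cong) (auto simp: P_def)
      also have "\<dots> = (\<Sum>v \<in> {0..<n} \<inter> {v. v < m}. X $$ (u, v))"
        by (simp add: sum.inter_restrict)
      also have "{0..<n} \<inter> {v. v < m} = {0..<m}" using mn by auto
      finally show ?thesis using True by (simp add: Y_def)
    next
      case False
      have "(\<Sum>v = 0..<n. X $$ (u, v) * P $$ (v, c)) = (\<Sum>v = 0..<n. if v = c then X $$ (u, c) else 0)"
        using False that by (intro sum.cong) (auto simp: P_def)
      also have "\<dots> = X $$ (u, c)" using that by simp
      finally show ?thesis using False by (simp add: Y_def)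
    qed
    finally show ?thesis .
  qed
  have LXP: "(L * (X * P)) $$ (r, c) = (if r < m - 1 then Y r c - Y (m - 1) c else Y r c)" if "r < n" "c < n" for r c
  proof -
    have "(L * (X * P)) $$ (r, c) = (\<Sum>u = 0..<n. L $$ (r, u) * (X * P) $$ (u, c))"
      using that X Pc Lc by (simp add: scalar_prod_def)
    also have "\<dots> = (\<Sum>u = 0..<n. L $$ (r, u) * Y u c)"
      using that by (intro sum.cong) (auto simp: XP)
    also have "\<dots> = (if r < m - 1 then Y r c - Y (m - 1) c else Y r c)"
    proof (cases "r < m - 1")
      case True
      have "(\<Sum>u = 0..<n. L $$ (r, u) * Y u c) = (\<Sum>u = 0..<n. (if u = r then Y r c else 0) - (if u = m - 1 then Y (m - 1) c else 0))"
        using True that by (intro sum.cong) (auto simp: L_def)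
      also have "\<dots> = Y r c - Y (m - 1) c"
        using True that mn m1 by (simp add: sum_subtractf)
      finally show ?thesis using True by simp
    next
      case False
      have "(\<Sum>u = 0..<n. L $$ (r, u) * Y u c) = (\<Sum>u = 0..<n. (if u = r then Y r c else 0))"
        using False that by (intro sum.cong) (auto simp: L_def)
      also have "\<dots> = Y r c" using that by simp
      finally show ?thesis using False by simp
    qed
    finally show ?thesis .
  qed
  define R where "R = mat (m - 1) (m - 1) (\<lambda>(r, c). X $$ (r, c) - X $$ (m - 1, c))"
  define Q where "Q = mat (n - m + 1) (n - m + 1) (\<lambda>(r, c). if c = 0 then (\<Sum>v = 0..<m. X $$ (r + m - 1, v))
        else X $$ (r + m - 1, c + m - 1))"
  define W where "W = mat (n - m + 1) (m - 1) (\<lambda>(r, c). Y (r + m - 1) c)"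
  have eq: "L * (X * P) = four_block_mat R (0\<^sub>m (m - 1) (n - m + 1)) W Q"
  proof (rule eq_matI)
    fix i j assume ij: "i < dim_row (four_block_mat R (0\<^sub>m (m - 1) (n - m + 1)) W Q)"
      "j < dim_col (four_block_mat R (0\<^sub>m (m - 1) (n - m + 1)) W Q)"
    hence i: "i < n" and j: "j < n" using mn m1 by (auto simp: R_def Q_def)
    show "(L * (X * P)) $$ (i, j) = four_block_mat R (0\<^sub>m (m - 1) (n - m + 1)) W Q $$ (i, j)"
    proof -
      have "four_block_mat R (0\<^sub>m (m - 1) (n - m + 1)) W Q $$ (i, j) =
        (if i < m - 1 then if j < m - 1 then R $$ (i, j) else 0 
         else if j < m - 1 then W $$ (i - (m - 1), j) else Q $$ (i - (m - 1), j - (m - 1)))"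
        using ij by (subst index_mat_four_block) (auto simp: R_def Q_def W_def)
      also have "\<dots> = (if i < m - 1 then Y i j - Y (m - 1) j else Y i j)"
      proof (cases "i < m - 1")
        case True
        show ?thesis
        proof (cases "j < m - 1")
          case True
          thus ?thesis using \<open>i < m - 1\<close> by (simp add: R_def Y_def)
        next
          case False
          have "Y i j - Y (m - 1) j = 0"
          proof (cases "j = m - 1")
            case True
            thus ?thesis using rs \<open>i < m - 1\<close> m1 by (simp add: Y_def)
          next
            case False
            hence "m \<le> j" using \<open>\<not> j < m - 1\<close> by simp
            have "i < m" using \<open>i < m - 1\<close> by simp
            from cc[rule_format, OF this \<open>m \<le> j\<close> j] have "X $$ (i, j) = X $$ (m - 1, j)" .
            thus ?thesis using False by (simp add: Y_def)
          qed
          thus ?thesis using \<open>i < m - 1\<close> False by simp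
        qed
      next
        case False
        show ?thesis
        proof (cases "j < m - 1")
          case True
          thus ?thesis using False i m1 by (simp add: W_def)
        next
          case False2: False
          have "Q $$ (i - (m - 1), j - (m - 1)) = Y i j"
            using False False2 i j m1 mn by (auto simp: Q_def Y_def)
          thus ?thesis using False False2 by simp
        qed
      qed
      also have "\<dots> = (L * (X * P)) $$ (i, j)" using LXP[OF i j] by simp
      finally show ?thesis by simp
    qed
  qed (insert Lc X Pc m1 mn, auto simp: R_def Q_def W_def)
  have "det X = det L * (det X * det P)" using dL dP by simp
  also have "\<dots> = det (L * (X * P))"
    using Lc X Pc by (simp add: det_mult[of _ n])
  also have "\<dots> = det R * det Q"
    unfolding eq by (rule det_four_block_mat_upper_right_zero) (auto simp: R_def Q_def W_def)
  finally show ?thesis by (simp add: R_def Q_def)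
qed

lemma det_perm_sim:
  fixes A :: "real mat"
  assumes A: "A \<in> carrier_mat n n" and p: "p permutes {0..<n}"
  shows "det (mat n n (\<lambda>(i, j). A $$ (p i, p j))) = det A"
proof -
  define A1 where "A1 = mat n n (\<lambda>(i, j). A $$ (p i, j))"
  have A1c: "A1 \<in> carrier_mat n n" by (simp add: A1_def)
  have d1: "det A1 = signof p * det A" unfolding A1_def by (rule det_permute_rows[OF A p])
  have pn: "i < n \<Longrightarrow> p i < n" for i using p by (simp add: permutes_in_image)
  have eq: "mat n n (\<lambda>(i, j). A $$ (p i, p j)) = transpose_mat (mat n n (\<lambda>(i, j). transpose_mat A1 $$ (p i, j)))"
    by (rule eq_matI) (auto simp: A1_def pn)
  have tc: "transpose_mat A1 \<in> carrier_mat n n" using A1c by simp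
  have "det (mat n n (\<lambda>(i, j). A $$ (p i, p j))) = det (mat n n (\<lambda>(i, j). transpose_mat A1 $$ (p i, j)))"
    unfolding eq by (rule det_transpose[of _ n]) simp
  also have "\<dots> = signof p * det (transpose_mat A1)" by (rule det_permute_rows[OF tc p])
  also have "\<dots> = signof p * (signof p * det A)" using det_transpose[OF A1c] d1 by simp
  also have "\<dots> = det A"
    by (cases p rule: sign_cases) auto
  finally show ?thesis .
qed

definition matL :: "'p list \<Rightarrow> ('p \<Rightarrow> 'p \<Rightarrow> real) \<Rightarrow> real mat" where
  "matL ps e = mat (length ps) (length ps) (\<lambda>(i, j). e (ps ! i) (ps ! j))"

lemma matL_carrier[simp]: "matL ps e \<in> carrier_mat (length ps) (length ps)"
  by (simp add: matL_def)

lemma det_matL_perm: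
  assumes "mset xs = mset ys"
  shows "det (matL xs e) = det (matL ys e)"
proof -
  obtain p where p: "p permutes {..<length ys}" "permute_list p ys = xs"
    using mset_eq_permutation[OF assms] by blast
  have len: "length xs = length ys" using assms by (metis size_mset)
  have p': "p permutes {0..<length ys}" using p(1) by (simp add: atLeast0LessThan)
  have xs: "i < length ys \<Longrightarrow> xs ! i = ys ! p i" for i
    using p(2) by (auto simp: permute_list_def)
  have "matL xs e = mat (length ys) (length ys) (\<lambda>(i, j). matL ys e $$ (p i, p j))"
    using p' by (auto intro!: eq_matI simp: matL_def len xs permutes_in_image)
  thus ?thesis using det_perm_sim[OF matL_carrier p'] by simp
qed

lemma det_diag_scale:
  fixes A :: "real mat"
  assumes A: "A \<in> carrier_mat k k" and a: "\<And>i. i < k \<Longrightarrow> a i \<noteq> 0"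
  shows "det (mat k k (\<lambda>(i, j). a i * A $$ (i, j) / a j)) = det A"
proof -
  define D1 :: "real mat" where "D1 = mat k k (\<lambda>(i, j). if i = j then a i else 0)"
  define D2 :: "real mat" where "D2 = mat k k (\<lambda>(i, j). if i = j then 1 / a i else 0)"
  have D1c: "D1 \<in> carrier_mat k k" and D2c: "D2 \<in> carrier_mat k k" by (auto simp: D1_def D2_def)
  have d1: "det D1 = prod_list (map a [0..<k])"
    by (subst det_upper_triangular[OF _ D1c]) (auto simp: D1_def upper_triangular_def diag_mat_def intro!: arg_cong[where f=prod_list])
  have d2: "det D2 = prod_list (map (\<lambda>i. 1 / a i) [0..<k])"
    by (subst det_upper_triangular[OF _ D2c]) (auto simp: D2_def upper_triangular_def diag_mat_def intro!: arg_cong[where f=prod_list])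
  have d12: "det D1 * det D2 = 1" unfolding d1 d2 using a
    by (induction k) (auto simp: field_simps)
  have e1: "(D1 * A) $$ (i, j) = a i * A $$ (i, j)" if "i < k" "j < k" for i j
  proof -
    have "(D1 * A) $$ (i, j) = (\<Sum>l = 0..<k. D1 $$ (i, l) * A $$ (l, j))"
      using that A D1c by (simp add: scalar_prod_def)
    also have "\<dots> = (\<Sum>l = 0..<k. if l = i then a i * A $$ (i, j) else 0)"
      using that by (intro sum.cong) (auto simp: D1_def)
    finally show ?thesis using that by simp
  qed
  obtain B where B: "B = D1 * A" by blast
  have Bc: "B \<in> carrier_mat k k" using B A D1c by simp
  have e2: "(B * D2) $$ (i, j) = a i * A $$ (i, j) / a j" if "i < k" "j < k" for i j
  proof -
    have "(B * D2) $$ (i, j) = (\<Sum>l = 0..<k. B $$ (i, l) * D2 $$ (l, j))"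
      using that Bc D2c by (simp add: scalar_prod_def)
    also have "\<dots> = (\<Sum>l = 0..<k. if l = j then a i * A $$ (i, j) / a j else 0)"
      using that by (intro sum.cong) (auto simp: D2_def e1 B)
    finally show ?thesis using that by simp
  qed
  have "mat k k (\<lambda>(i, j). a i * A $$ (i, j) / a j) = B * D2"
  proof (rule eq_matI)
    fix i j assume ij: "i < dim_row (B * D2)" "j < dim_col (B * D2)"
    hence "i < k" "j < k" using Bc D2c by auto
    thus "mat k k (\<lambda>(i, j). a i * A $$ (i, j) / a j) $$ (i, j) = (B * D2) $$ (i, j)"
      by (simp only: e2) simp
  qed (use Bc D2c in auto)
  hence "det (mat k k (\<lambda>(i, j). a i * A $$ (i, j) / a j)) = det D1 * det A * det D2"
    using A D1c D2c Bc by (simp add: det_mult[of _ k] B)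
  thus ?thesis using d12 by (simp add: algebra_simps)
qed

lemma sum_nth_set: "distinct xs \<Longrightarrow> (\<Sum>v = 0..<length xs. f (xs ! v)) = sum f (set xs)"
proof -
  assume d: "distinct xs"
  have "sum f (set xs) = sum_list (map f xs)" by (rule sum_list_distinct_conv_sum_set[symmetric, OF d])
  also have "\<dots> = (\<Sum>v = 0..<length xs. f (xs ! v))" by (simp add: sum_list_sum_nth)
  finally show ?thesis by simp
qed

definition ebl :: "('a \<Rightarrow> nat) \<Rightarrow> ('a \<Rightarrow> 'a \<Rightarrow> real) \<Rightarrow> (nat \<Rightarrow> nat \<Rightarrow> real) \<Rightarrow> (nat \<Rightarrow> real) \<Rightarrow> (nat \<Rightarrow> nat)
    \<Rightarrow> ('a + nat) \<Rightarrow> ('a + nat) \<Rightarrow> real" where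
  "ebl blk M cc s nn x z = (case x of
      Inl u \<Rightarrow> (case z of Inl v \<Rightarrow> M u v | Inr j \<Rightarrow> cc (blk u) j * real (nn j))
    | Inr i \<Rightarrow> (case z of Inl v \<Rightarrow> cc i (blk v) | Inr j \<Rightarrow> if i = j then s i else cc i j * real (nn j)))"

lemma ebl_simps[simp]:
  "ebl blk M cc s nn (Inl u) (Inl v) = M u v"
  "ebl blk M cc s nn (Inl u) (Inr j) = cc (blk u) j * real (nn j)"
  "ebl blk M cc s nn (Inr i) (Inl v) = cc i (blk v)"
  "ebl blk M cc s nn (Inr i) (Inr j) = (if i = j then s i else cc i j * real (nn j))"
  by (simp_all add: ebl_def)

lemma block_step:
  fixes bl :: "nat \<Rightarrow> 'a list" and rest :: "('a + nat) list" and blk :: "'a \<Rightarrow> nat"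
    and M :: "'a \<Rightarrow> 'a \<Rightarrow> real" and cc :: "nat \<Rightarrow> nat \<Rightarrow> real" and s :: "nat \<Rightarrow> real"
  defines "e \<equiv> ebl blk M cc s (\<lambda>i. length (bl i))"
  assumes ne: "bl q \<noteq> []" and dq: "distinct (bl q)"
    and blk: "\<forall>u\<in>set (bl q). blk u = q"
    and rsum: "\<forall>u\<in>set (bl q). (\<Sum>v\<in>set (bl q). M u v) = s q"
    and rest: "\<forall>x\<in>set rest. (case x of Inl v \<Rightarrow> blk v \<noteq> q \<and>
        (\<forall>u\<in>set (bl q). M u v = cc q (blk v) \<and> M v u = cc (blk v) q) | Inr j \<Rightarrow> j \<noteq> q)"
  shows "\<exists>R. det (matL (map Inl (bl q) @ rest) e) = R * det (matL (rest @ [Inr q]) e) \<and>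
     det (matL (map Inl (bl q)) e) = R * s q \<and> (length (bl q) = 1 \<longrightarrow> R = 1)"
proof -
  define m where "m = length (bl q)"
  define p where "p = length rest"
  define ps where "ps = map Inl (bl q) @ rest"
  define X where "X = matL ps e"
  have m1: "1 \<le> m" using ne by (simp add: m_def Suc_le_eq)
  have lps: "length ps = m + p" by (simp add: ps_def m_def p_def)
  have psn: "ps ! r = (if r < m then Inl (bl q ! r) else rest ! (r - m))" for r
    by (simp add: ps_def m_def nth_append)
  have Xc: "X \<in> carrier_mat (m + p) (m + p)" by (metis X_def lps matL_carrier)
  have Xe: "X $$ (r, c) = e (ps ! r) (ps ! c)" if "r < m + p" "c < m + p" for r c
    using that lps by (simp add: X_def matL_def)
  have blkm: "blk (bl q ! r) = q" if "r < m" for r using blk that by (simp add: m_def)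
  have rowsum: "(\<Sum>v = 0..<m. M (bl q ! r) (bl q ! v)) = s q" if "r < m" for r
    using rsum that dq by (simp add: m_def sum_nth_set)
  have rs: "\<forall>r<m. (\<Sum>v = 0..<m. X $$ (r, v)) = s q"
  proof (intro allI impI)
    fix r assume r: "r < m"
    have "(\<Sum>v = 0..<m. X $$ (r, v)) = (\<Sum>v = 0..<m. M (bl q ! r) (bl q ! v))"
      using r by (intro sum.cong) (auto simp: Xe psn e_def)
    thus "(\<Sum>v = 0..<m. X $$ (r, v)) = s q" using rowsum[OF r] by simp
  qed
  have restc: "\<And>x. x \<in> set rest \<Longrightarrow> (case x of Inl v \<Rightarrow> blk v \<noteq> q \<and>
        (\<forall>u\<in>set (bl q). M u v = cc q (blk v) \<and> M v u = cc (blk v) q) | Inr j \<Rightarrow> j \<noteq> q)"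
    using rest by blast
  have rowconst: "e (Inl (bl q ! r)) x = e (Inr q) x" if "r < m" "x \<in> set rest" for r x
  proof (cases x)
    case (Inl v)
    thus ?thesis using restc[OF that(2)] that(1) by (auto simp: e_def m_def)
  next
    case (Inr j)
    thus ?thesis using restc[OF that(2)] that(1) blkm by (auto simp: e_def)
  qed
  have cc': "\<forall>r<m. \<forall>c. m \<le> c \<longrightarrow> c < m + p \<longrightarrow> X $$ (r, c) = X $$ (m - 1, c)"
  proof (intro allI impI)
    fix r c assume r: "r < m" and c: "m \<le> c" "c < m + p"
    have rc: "rest ! (c - m) \<in> set rest" using c by (simp add: p_def)
    show "X $$ (r, c) = X $$ (m - 1, c)"
      using r c m1 rowconst[OF r rc] rowconst[OF _ rc, of "m - 1"] by (simp add: Xe psn)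
  qed
  from core_det[OF Xc m1 _ rs cc'] 
  have dX: "det X = det (mat (m - 1) (m - 1) (\<lambda>(r, c). X $$ (r, c) - X $$ (m - 1, c))) *
     det (mat (m + p - m + 1) (m + p - m + 1) (\<lambda>(r, c). if c = 0 then (\<Sum>v = 0..<m. X $$ (r + m - 1, v))
        else X $$ (r + m - 1, c + m - 1)))" by simp
  define R where "R = det (mat (m - 1) (m - 1) (\<lambda>(r, c). X $$ (r, c) - X $$ (m - 1, c)))"
  have Nq: "mat (m + p - m + 1) (m + p - m + 1) (\<lambda>(r, c). if c = 0 then (\<Sum>v = 0..<m. X $$ (r + m - 1, v))
        else X $$ (r + m - 1, c + m - 1)) = matL (Inr q # rest) e"
  proof (rule eq_matI)
    fix r c assume "r < dim_row (matL (Inr q # rest) e)" "c < dim_col (matL (Inr q # rest) e)"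
    hence r: "r < p + 1" and c: "c < p + 1" by (auto simp: matL_def p_def)
    show "mat (m + p - m + 1) (m + p - m + 1) (\<lambda>(r, c). if c = 0 then (\<Sum>v = 0..<m. X $$ (r + m - 1, v))
        else X $$ (r + m - 1, c + m - 1)) $$ (r, c) = matL (Inr q # rest) e $$ (r, c)"
    proof (cases "c = 0")
      case True
      show ?thesis
      proof (cases "r = 0")
        case True
        thus ?thesis using \<open>c = 0\<close> rs m1 by (simp add: matL_def e_def)
      next
        case False
        define x where "x = rest ! (r - 1)"
        have x: "x \<in> set rest" using r False by (simp add: x_def p_def)
        have "(\<Sum>v = 0..<m. X $$ (r + m - 1, v)) = (\<Sum>v = 0..<m. e x (Inl (bl q ! v)))"
          using r False m1 by (intro sum.cong) (auto simp: Xe psn x_def)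
        also have "\<dots> = e x (Inr q)"
        proof (cases x)
          case (Inl u)
          have "(\<Sum>v = 0..<m. e x (Inl (bl q ! v))) = (\<Sum>v = 0..<m. cc (blk u) q)"
            using restc[OF x] Inl by (intro sum.cong) (auto simp: e_def m_def)
          thus ?thesis using Inl by (simp add: e_def m_def)
        next
          case (Inr i)
          have "(\<Sum>v = 0..<m. e x (Inl (bl q ! v))) = (\<Sum>v = 0..<m. cc i q)"
            using Inr blkm by (intro sum.cong) (auto simp: e_def)
          thus ?thesis using Inr restc[OF x] by (simp add: e_def m_def)
        qed
        finally show ?thesis using \<open>c = 0\<close> r c False by (simp add: matL_def x_def p_def nth_Cons')
      qed
    next
      case False
      have cx: "rest ! (c - 1) \<in> set rest" using c False by (simp add: p_def)
      have c1: "\<not> (c + m - 1 < m)" "c + m - 1 - m = c - 1" using False m1 by auto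
      show ?thesis
      proof (cases "r = 0")
        case True
        thus ?thesis using False c m1 rowconst[OF _ cx, of "m - 1"] c1 by (simp add: matL_def Xe psn p_def nth_Cons')
      next
        case False2: False
        have r1: "\<not> (r + m - 1 < m)" "r + m - 1 - m = r - 1" using False2 m1 by auto
        thus ?thesis using False2 False c r m1 c1 by (simp add: matL_def Xe psn p_def nth_Cons')
      qed
    qed
  qed (auto simp: matL_def p_def)
  have perm: "det (matL (Inr q # rest) e) = det (matL (rest @ [Inr q]) e)"
    by (rule det_matL_perm) simp
  have top: "det (matL ps e) = R * det (matL (rest @ [Inr q]) e)"
    using dX Nq perm by (simp add: R_def X_def)
  define XB where "XB = matL (map Inl (bl q)) e"
  have XBc: "XB \<in> carrier_mat m m" by (metis XB_def m_def matL_carrier length_map)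
  have XBe: "XB $$ (r, c) = M (bl q ! r) (bl q ! c)" if "r < m" "c < m" for r c
    using that by (simp add: XB_def matL_def m_def e_def)
  have rsB: "\<forall>r<m. (\<Sum>v = 0..<m. XB $$ (r, v)) = s q"
    using rowsum by (simp add: XBe)
  from core_det[OF XBc m1 _ rsB] 
  have dXB: "det XB = det (mat (m - 1) (m - 1) (\<lambda>(r, c). XB $$ (r, c) - XB $$ (m - 1, c))) *
     det (mat (m - m + 1) (m - m + 1) (\<lambda>(r, c). if c = 0 then (\<Sum>v = 0..<m. XB $$ (r + m - 1, v))
        else XB $$ (r + m - 1, c + m - 1)))" by simp
  have RB: "mat (m - 1) (m - 1) (\<lambda>(r, c). XB $$ (r, c) - XB $$ (m - 1, c)) =
            mat (m - 1) (m - 1) (\<lambda>(r, c). X $$ (r, c) - X $$ (m - 1, c))"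
    by (rule eq_matI) (auto simp: XBe Xe psn e_def)
  have one: "det (mat (m - m + 1) (m - m + 1) (\<lambda>(r, c). if c = 0 then (\<Sum>v = 0..<m. XB $$ (r + m - 1, v))
        else XB $$ (r + m - 1, c + m - 1))) = s q"
    using rsB m1 by (subst det_single) auto
  have bot: "det XB = R * s q" using dXB RB one by (simp add: R_def)
  have R1: "length (bl q) = 1 \<longrightarrow> R = 1"
    by (auto simp: R_def m_def)
  show ?thesis using top bot R1 by (auto simp: ps_def XB_def)
qed

lemma block_iter:
  fixes bl :: "nat \<Rightarrow> 'a list" and blk :: "'a \<Rightarrow> nat"
    and M :: "'a \<Rightarrow> 'a \<Rightarrow> real" and cc :: "nat \<Rightarrow> nat \<Rightarrow> real" and s :: "nat \<Rightarrow> real"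
  defines "e \<equiv> ebl blk M cc s (\<lambda>i. length (bl i))"
  assumes ne: "\<forall>i<k. bl i \<noteq> []" and dist: "\<forall>i<k. distinct (bl i)"
    and blk: "\<forall>i<k. \<forall>u\<in>set (bl i). blk u = i"
    and rsum: "\<forall>i<k. \<forall>u\<in>set (bl i). (\<Sum>v\<in>set (bl i). M u v) = s i"
    and off: "\<forall>i<k. \<forall>j<k. i \<noteq> j \<longrightarrow> (\<forall>u\<in>set (bl i). \<forall>v\<in>set (bl j). M u v = cc i j)"
    and sne: "\<forall>i<k. length (bl i) \<noteq> 1 \<longrightarrow> s i \<noteq> 0"
  shows "q \<le> k \<Longrightarrow> det (matL (concat (map (\<lambda>i. map Inl (bl i)) [q..<k]) @ map Inr [0..<q]) e) =
     (\<Prod>i\<in>{q..<k}. if length (bl i) = 1 then 1 else det (matL (map Inl (bl i)) e) / s i) *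
     det (matL (map Inr [0..<k]) e)"
proof (induction "k - q" arbitrary: q)
  case 0
  hence "q = k" by simp
  thus ?case by simp
next
  case (Suc d)
  hence qk: "q < k" by simp
  define rest where "rest = concat (map (\<lambda>i. map Inl (bl i)) [Suc q..<k]) @ map Inr [0..<q]"
  have st: "concat (map (\<lambda>i. map Inl (bl i)) [q..<k]) @ map Inr [0..<q] = map Inl (bl q) @ rest"
    using qk by (simp add: rest_def upt_conv_Cons)
  have st2: "rest @ [Inr q] = concat (map (\<lambda>i. map Inl (bl i)) [Suc q..<k]) @ map Inr [0..<Suc q]"
    by (simp add: rest_def)
  have restc: "\<forall>x\<in>set rest. (case x of Inl v \<Rightarrow> blk v \<noteq> q \<and>
        (\<forall>u\<in>set (bl q). M u v = cc q (blk v) \<and> M v u = cc (blk v) q) | Inr j \<Rightarrow> j \<noteq> q)"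
  proof
    fix x assume "x \<in> set rest"
    then consider (a) j v where "Suc q \<le> j" "j < k" "v \<in> set (bl j)" "x = Inl v" | (b) j where "j < q" "x = Inr j"
      by (auto simp: rest_def)
    thus "case x of Inl v \<Rightarrow> blk v \<noteq> q \<and>
        (\<forall>u\<in>set (bl q). M u v = cc q (blk v) \<and> M v u = cc (blk v) q) | Inr j \<Rightarrow> j \<noteq> q"
    proof cases
      case a
      have bv: "blk v = j" using blk a by auto
      show ?thesis using a bv off qk by auto
    next
      case b thus ?thesis by auto
    qed
  qed
  obtain R where R: "det (matL (map Inl (bl q) @ rest) e) = R * det (matL (rest @ [Inr q]) e)"
     "det (matL (map Inl (bl q)) e) = R * s q" "length (bl q) = 1 \<longrightarrow> R = 1"
    using block_step[of bl q blk M s rest cc] ne dist blk rsum restc qk unfolding e_def by blast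
  have RR: "R = (if length (bl q) = 1 then 1 else det (matL (map Inl (bl q)) e) / s q)"
    using R(2,3) sne qk by auto
  have IH: "det (matL (rest @ [Inr q]) e) = (\<Prod>i\<in>{Suc q..<k}. if length (bl i) = 1 then 1 else det (matL (map Inl (bl i)) e) / s i) *
     det (matL (map Inr [0..<k]) e)"
    unfolding st2 using Suc qk by (intro Suc.hyps) auto
  show ?case unfolding st R(1) IH RR using qk by (simp add: prod.atLeast_Suc_lessThan)
qed

lemma leaves_ne: "wf_conn s \<Longrightarrow> leaves s \<noteq> []"
proof (induction s)
  case (Leaf a) thus ?case by simp
next
  case (Node E ts)
  hence "0 < length ts" by auto
  hence m: "ts ! 0 \<in> set ts" by (rule nth_mem)
  hence "wf_conn (ts ! 0)" using Node.prems by (auto simp: list_all_iff)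
  hence "leaves (ts ! 0) \<noteq> []" using Node.IH m by blast
  thus ?case using \<open>ts ! 0 \<in> set ts\<close> by auto
qed

lemma leaves_len_ge2: "wf_conn (Node E ts) \<Longrightarrow> 2 \<le> length (leaves (Node E ts))"
proof -
  assume wf: "wf_conn (Node E ts)"
  hence k: "2 \<le> length ts" and w: "\<forall>c\<in>set ts. wf_conn c" by (auto simp: list_all_iff)
  obtain a b rs where ts: "ts = a # b # rs" using k by (cases ts; cases "tl ts"; auto)
  have "leaves a \<noteq> []" "leaves b \<noteq> []" using w ts leaves_ne by auto
  thus ?thesis using ts by (cases "leaves a"; cases "leaves b") auto
qed

lemma internal_Leaf[simp]: "internal (Leaf a) = {}"
proof -
  have "subt (Leaf a) p \<noteq> Some (Node E ts)" for p E ts by (cases p) auto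
  thus ?thesis by (auto simp: internal_def)
qed

lemma internal_Node: "internal (Node E ts) = insert [] (\<Union>i\<in>{0..<length ts}. (Cons i) ` internal (ts ! i))"
  apply (rule Set.set_eqI)
  subgoal for p by (cases p) (auto simp: internal_def image_iff)
  done

lemma finite_internal: "finite (internal s)"
proof (induction s)
  case (Leaf a) thus ?case by simp
next
  case (Node E ts) thus ?case by (auto simp: internal_Node)
qed

lemma phi_at_Cons: "i < length ts \<Longrightarrow> phi_at (Node E ts) (i # p) x t = phi_at (ts ! i) p x t"
  by (simp add: phi_at_def)

lemma rw_Cons: "i < length ts \<Longrightarrow> rw (Node E ts) (i # p) = rw (ts ! i) p"
  by (simp add: rw_def)

lemma Nw_Cons: "i < length ts \<Longrightarrow> q \<noteq> [] \<Longrightarrow> Nw (Node E ts) (i # q) = Nw (ts ! i) q"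
proof -
  assume a: "i < length ts" "q \<noteq> []"
  have "last (i # q) = last q" "butlast (i # q) = i # butlast q" using a by auto
  thus ?thesis unfolding Nw_def using a by (simp only:) simp
qed

lemma Nrw_Cons: "i < length ts \<Longrightarrow> Nrw (Node E ts) (i # p) = Nchild E ts i + Nrw (ts ! i) p"
proof -
  assume i: "i < length ts"
  have "Nrw (Node E ts) (i # p) = (\<Sum>k = 1..Suc (length p). Nw (Node E ts) (take k (i # p)))"
    by (simp add: Nrw_def)
  also have "\<dots> = Nw (Node E ts) (take 1 (i # p)) + (\<Sum>k = Suc 1..Suc (length p). Nw (Node E ts) (take k (i # p)))"
    by (rule sum.atLeast_Suc_atMost) simp
  also have "(\<Sum>k = Suc 1..Suc (length p). Nw (Node E ts) (take k (i # p))) = (\<Sum>k = 1..length p. Nw (Node E ts) (take (Suc k) (i # p)))"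
    by (rule sum.shift_bounds_cl_Suc_ivl)
  also have "\<dots> = (\<Sum>k = 1..length p. Nw (ts ! i) (take k p))"
  proof (intro sum.cong refl)
    fix x assume x: "x \<in> {1..length p}"
    hence t: "take x p \<noteq> []" by (cases p) auto
    show "Nw (Node E ts) (take (Suc x) (i # p)) = Nw (ts ! i) (take x p)" using Nw_Cons[OF i t] by simp
  qed
  also have "Nw (Node E ts) (take 1 (i # p)) = Nchild E ts i" by (simp add: Nw_def)
  finally show ?thesis by (simp add: Nrw_def)
qed

lemma Nrw_Nil[simp]: "Nrw T [] = 0" by (simp add: Nrw_def)

lemma distinct_concat_disj:
  "distinct (concat xs) \<Longrightarrow> i < length xs \<Longrightarrow> j < length xs \<Longrightarrow> i \<noteq> j \<Longrightarrow> set (xs ! i) \<inter> set (xs ! j) = {}"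
proof (induction xs arbitrary: i j)
  case Nil thus ?case by simp
next
  case (Cons a xs)
  show ?case
  proof (cases i)
    case 0
    then obtain j' where j: "j = Suc j'" using Cons by (cases j) auto
    hence m: "xs ! j' \<in> set xs" using Cons by simp
    have "set ((a#xs)!i) \<inter> set ((a#xs)!j) = set a \<inter> set (xs!j')" using 0 j by simp
    moreover have "set a \<inter> \<Union>(set ` set xs) = {}" using Cons.prems(1) by simp
    ultimately show ?thesis using m by blast
  next
    case (Suc i')
    show ?thesis
    proof (cases j)
      case 0
      hence m: "xs ! i' \<in> set xs" using Cons Suc by simp
      have "set ((a#xs)!i) \<inter> set ((a#xs)!j) = set (xs!i') \<inter> set a" using 0 Suc by simp
      moreover have "set a \<inter> \<Union>(set ` set xs) = {}" using Cons.prems(1) by simp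
      ultimately show ?thesis using m by blast
    next
      case (Suc j') thus ?thesis using Cons \<open>i = Suc i'\<close> by auto
    qed
  qed
qed

lemma distinct_concat_nth: "distinct (concat xs) \<Longrightarrow> i < length xs \<Longrightarrow> distinct (xs ! i)"
  by (metis distinct_concat_iff nth_mem)

lemma compose_edges:
  "wf_conn s \<Longrightarrow> distinct (leaves s) \<Longrightarrow> e \<in> compose s \<Longrightarrow>
     \<exists>x y. e = {x, y} \<and> x \<noteq> y \<and> x \<in> set (leaves s) \<and> y \<in> set (leaves s)"
proof (induction s arbitrary: e)
  case (Leaf a) thus ?case by simp
next
  case (Node E ts)
  have sg: "simple_graph {..<length ts} E" using Node.prems by simp
  from Node.prems(3) consider (a) c where "c \<in> set ts" "e \<in> compose c"
    | (b) x y i j where "e = {x, y}" "{i, j} \<in> E" "i < length ts" "j < length ts"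
        "x \<in> set (leaves (ts ! i))" "y \<in> set (leaves (ts ! j))"
    by auto
  thus ?case
  proof cases
    case a
    have "wf_conn c" using a Node.prems by (auto simp: list_all_iff)
    moreover have "distinct (leaves c)" using a Node.prems(2)
      by (auto simp: distinct_concat_iff)
    ultimately obtain x y where "e = {x, y} \<and> x \<noteq> y \<and> x \<in> set (leaves c) \<and> y \<in> set (leaves c)"
      using Node.IH a by blast
    thus ?thesis using a by auto
  next
    case b
    have ij: "i \<noteq> j" using b sg unfolding simple_graph_def by (auto simp: doubleton_eq_iff)
    have "set (leaves (ts ! i)) \<inter> set (leaves (ts ! j)) = {}"
      using distinct_concat_disj[of "map leaves ts" i j] Node.prems(2) b ij by simp
    hence "x \<noteq> y" using b by auto
    have "ts ! i \<in> set ts" "ts ! j \<in> set ts" using b by auto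
    hence "x \<in> set (leaves (Node E ts))" "y \<in> set (leaves (Node E ts))" using b by auto
    thus ?thesis using b \<open>x \<noteq> y\<close> by blast
  qed
qed

lemma child_facts:
  assumes wf: "wf_conn (Node E ts)" and d: "distinct (leaves (Node E ts))"
  shows "\<And>i. i < length ts \<Longrightarrow> wf_conn (ts ! i)"
    and "\<And>i. i < length ts \<Longrightarrow> distinct (leaves (ts ! i))"
    and "\<And>i j. i < length ts \<Longrightarrow> j < length ts \<Longrightarrow> i \<noteq> j \<Longrightarrow> set (leaves (ts ! i)) \<inter> set (leaves (ts ! j)) = {}"
    and "\<And>i j u. i < length ts \<Longrightarrow> j < length ts \<Longrightarrow> u \<in> set (leaves (ts ! i)) \<Longrightarrow> u \<in> set (leaves (ts ! j)) \<Longrightarrow> i = j"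
    and "simple_graph {..<length ts} E"
proof -
  show "\<And>i. i < length ts \<Longrightarrow> wf_conn (ts ! i)" using wf by (auto simp: list_all_iff)
  show "\<And>i. i < length ts \<Longrightarrow> distinct (leaves (ts ! i))"
    using d distinct_concat_nth[of "map leaves ts"] by simp
  show D: "\<And>i j. i < length ts \<Longrightarrow> j < length ts \<Longrightarrow> i \<noteq> j \<Longrightarrow> set (leaves (ts ! i)) \<inter> set (leaves (ts ! j)) = {}"
    using d distinct_concat_disj[of "map leaves ts"] by simp
  show "\<And>i j u. i < length ts \<Longrightarrow> j < length ts \<Longrightarrow> u \<in> set (leaves (ts ! i)) \<Longrightarrow> u \<in> set (leaves (ts ! j)) \<Longrightarrow> i = j"
    using D by blast
  show "simple_graph {..<length ts} E" using wf by simp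
qed

lemma edge_in_child:
  assumes wf: "wf_conn (Node E ts)" and d: "distinct (leaves (Node E ts))"
    and e: "{u, v} \<in> compose (Node E ts)"
  shows "(\<exists>l<length ts. {u, v} \<in> compose (ts ! l) \<and> u \<in> set (leaves (ts ! l)) \<and> v \<in> set (leaves (ts ! l)) \<and> u \<noteq> v) \<or>
         (\<exists>a b. a < length ts \<and> b < length ts \<and> {a, b} \<in> E \<and> a \<noteq> b \<and> u \<in> set (leaves (ts ! a)) \<and> v \<in> set (leaves (ts ! b)))"
proof -
  note cf = child_facts[OF wf d]
  from e consider (a) c where "c \<in> set ts" "{u, v} \<in> compose c"
    | (b) x y a b where "{u, v} = {x, y}" "{a, b} \<in> E" "a < length ts" "b < length ts"
        "x \<in> set (leaves (ts ! a))" "y \<in> set (leaves (ts ! b))"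
    by auto
  thus ?thesis
  proof cases
    case a
    then obtain l where l: "l < length ts" "c = ts ! l" by (auto simp: in_set_conv_nth)
    obtain x y where "{u, v} = {x, y}" "x \<noteq> y" "x \<in> set (leaves c)" "y \<in> set (leaves c)"
      using compose_edges[of c "{u, v}"] a l cf(1,2) by blast
    hence "u \<in> set (leaves c) \<and> v \<in> set (leaves c) \<and> u \<noteq> v"
      by (auto simp: doubleton_eq_iff)
    thus ?thesis using a l by blast
  next
    case b
    have ab: "a \<noteq> b" using b cf(5) unfolding simple_graph_def by (auto simp: doubleton_eq_iff)
    from b(1) have "(u = x \<and> v = y) \<or> (u = y \<and> v = x)" by (auto simp: doubleton_eq_iff)
    thus ?thesis
    proof
      assume "u = x \<and> v = y" thus ?thesis using b ab by blast
    next
      assume uv: "u = y \<and> v = x"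
      have "{b, a} \<in> E" using b(2) by (simp add: insert_commute)
      thus ?thesis using b ab uv by blast
    qed
  qed
qed

lemma cross_edge:
  assumes wf: "wf_conn (Node E ts)" and d: "distinct (leaves (Node E ts))"
    and ij: "i < length ts" "j < length ts" "i \<noteq> j"
    and u: "u \<in> set (leaves (ts ! i))" and v: "v \<in> set (leaves (ts ! j))"
  shows "{u, v} \<in> compose (Node E ts) \<longleftrightarrow> {i, j} \<in> E"
proof
  note cf = child_facts[OF wf d]
  assume "{u, v} \<in> compose (Node E ts)"
  from edge_in_child[OF wf d this] show "{i, j} \<in> E"
  proof
    assume "\<exists>l<length ts. {u, v} \<in> compose (ts ! l) \<and> u \<in> set (leaves (ts ! l)) \<and> v \<in> set (leaves (ts ! l)) \<and> u \<noteq> v"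
    then obtain l where l: "l < length ts" "u \<in> set (leaves (ts ! l))" "v \<in> set (leaves (ts ! l))" by blast
    have "l = i" by (rule cf(4)[OF l(1) ij(1) l(2) u])
    moreover have "l = j" by (rule cf(4)[OF l(1) ij(2) l(3) v])
    ultimately show ?thesis using ij by simp
  next
    assume "\<exists>a b. a < length ts \<and> b < length ts \<and> {a, b} \<in> E \<and> a \<noteq> b \<and> u \<in> set (leaves (ts ! a)) \<and> v \<in> set (leaves (ts ! b))"
    then obtain a b where ab: "a < length ts" "b < length ts" "{a, b} \<in> E" "u \<in> set (leaves (ts ! a))" "v \<in> set (leaves (ts ! b))" by blast
    have "a = i" by (rule cf(4)[OF ab(1) ij(1) ab(4) u])
    moreover have "b = j" by (rule cf(4)[OF ab(2) ij(2) ab(5) v])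
    ultimately show ?thesis using ab(3) by simp
  qed
next
  assume "{i, j} \<in> E"
  thus "{u, v} \<in> compose (Node E ts)" using ij u v by auto
qed

lemma inner_edge:
  assumes wf: "wf_conn (Node E ts)" and d: "distinct (leaves (Node E ts))"
    and i: "i < length ts" and u: "u \<in> set (leaves (ts ! i))" and v: "v \<in> set (leaves (ts ! i))"
  shows "{u, v} \<in> compose (Node E ts) \<longleftrightarrow> {u, v} \<in> compose (ts ! i)"
proof
  note cf = child_facts[OF wf d]
  assume "{u, v} \<in> compose (Node E ts)"
  from edge_in_child[OF wf d this] show "{u, v} \<in> compose (ts ! i)"
  proof
    assume "\<exists>l<length ts. {u, v} \<in> compose (ts ! l) \<and> u \<in> set (leaves (ts ! l)) \<and> v \<in> set (leaves (ts ! l)) \<and> u \<noteq> v"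
    then obtain l where l: "l < length ts" "{u, v} \<in> compose (ts ! l)" "u \<in> set (leaves (ts ! l))" by blast
    have "l = i" by (rule cf(4)[OF l(1) i l(3) u])
    thus ?thesis using \<open>{u, v} \<in> compose (ts ! l)\<close> by simp
  next
    assume "\<exists>a b. a < length ts \<and> b < length ts \<and> {a, b} \<in> E \<and> a \<noteq> b \<and> u \<in> set (leaves (ts ! a)) \<and> v \<in> set (leaves (ts ! b))"
    then obtain a b where ab: "a < length ts" "b < length ts" "a \<noteq> b" "u \<in> set (leaves (ts ! a))" "v \<in> set (leaves (ts ! b))" by blast
    have "a = i" by (rule cf(4)[OF ab(1) i ab(4) u])
    moreover have "b = i" by (rule cf(4)[OF ab(2) i ab(5) v])
    ultimately show ?thesis using \<open>a \<noteq> b\<close> by simp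
  qed
next
  assume "{u, v} \<in> compose (ts ! i)"
  thus "{u, v} \<in> compose (Node E ts)" using i by (auto intro!: bexI[of _ "ts ! i"])
qed

lemma nbrs_child:
  assumes wf: "wf_conn (Node E ts)" and d: "distinct (leaves (Node E ts))"
    and i: "i < length ts" and u: "u \<in> set (leaves (ts ! i))"
  shows "{w. {w, u} \<in> compose (ts ! i)} \<subseteq> set (leaves (ts ! i))"
proof
  note cf = child_facts[OF wf d]
  fix w assume "w \<in> {w. {w, u} \<in> compose (ts ! i)}"
  then obtain x y where "{w, u} = {x, y}" "x \<in> set (leaves (ts ! i))" "y \<in> set (leaves (ts ! i))"
    using compose_edges[of "ts ! i" "{w, u}"] cf(1,2) i by blast
  thus "w \<in> set (leaves (ts ! i))" by (auto simp: doubleton_eq_iff)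
qed

lemma deg_child:
  assumes wf: "wf_conn (Node E ts)" and d: "distinct (leaves (Node E ts))"
    and i: "i < length ts" and u: "u \<in> set (leaves (ts ! i))"
  shows "deg (compose (Node E ts)) u = deg (compose (ts ! i)) u + Nchild E ts i"
proof -
  note cf = child_facts[OF wf d]
  define J where "J = {j. j < length ts \<and> {j, i} \<in> E}"
  define A where "A = {w. {w, u} \<in> compose (ts ! i)}"
  define B where "B = (\<Union>j\<in>J. set (leaves (ts ! j)))"
  have Jsub: "J \<subseteq> {..<length ts}" by (auto simp: J_def)
  have Jni: "i \<notin> J" using cf(5) unfolding J_def simple_graph_def by auto
  have notB: "set (leaves (ts ! i)) \<inter> B = {}" using cf(3) i Jsub Jni by (force simp: B_def)
  have eq: "{w. {w, u} \<in> compose (Node E ts)} = A \<union> B"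
  proof (rule Set.set_eqI)
    fix w
    show "w \<in> {w. {w, u} \<in> compose (Node E ts)} \<longleftrightarrow> w \<in> A \<union> B"
    proof (cases "\<exists>j<length ts. w \<in> set (leaves (ts ! j))")
      case True
      then obtain j where j: "j < length ts" "w \<in> set (leaves (ts ! j))" by blast
      show ?thesis
      proof (cases "j = i")
        case True
        hence "w \<notin> B" using notB j by auto
        thus ?thesis using inner_edge[OF wf d i _ u, of w] j True
          by (auto simp: A_def insert_commute)
      next
        case False
        have "w \<notin> A" using nbrs_child[OF wf d i u] cf(3)[OF j(1) i False] j by (auto simp: A_def)
        moreover have "w \<in> B \<longleftrightarrow> j \<in> J" using j cf(4) by (auto simp: B_def J_def)
        moreover have "{w, u} \<in> compose (Node E ts) \<longleftrightarrow> {j, i} \<in> E"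
          using cross_edge[OF wf d j(1) i False j(2) u] .
        ultimately show ?thesis using j by (auto simp: J_def)
      qed
    next
      case False
      have "w \<notin> A" using nbrs_child[OF wf d i u] False i by (auto simp: A_def)
      moreover have "w \<notin> B" using False Jsub by (auto simp: B_def)
      moreover have "{w, u} \<notin> compose (Node E ts)"
      proof
        assume "{w, u} \<in> compose (Node E ts)"
        from compose_edges[OF wf d this] obtain x y where "{w, u} = {x, y}" "x \<in> set (leaves (Node E ts))" "y \<in> set (leaves (Node E ts))" by blast
        hence "w \<in> set (leaves (Node E ts))" by (auto simp: doubleton_eq_iff)
        then obtain c where c: "c \<in> set ts" "w \<in> set (leaves c)" by auto
        then obtain j where "j < length ts" "c = ts ! j" by (auto simp: in_set_conv_nth)
        thus False using False c by blast
      qed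
      ultimately show ?thesis by simp
    qed
  qed
  have fA: "finite A" using nbrs_child[OF wf d i u] by (auto simp: A_def intro: finite_subset)
  have fB: "finite B" using Jsub by (auto simp: B_def intro: finite_subset)
  have AB: "A \<inter> B = {}"
  proof -
    have "A \<subseteq> set (leaves (ts ! i))" using nbrs_child[OF wf d i u] by (simp add: A_def)
    moreover note notB
    ultimately show ?thesis by blast
  qed
  have cB: "card B = (\<Sum>j\<in>J. card (set (leaves (ts ! j))))"
    unfolding B_def
    by (rule card_UN_disjoint) (use Jsub cf(3) in \<open>auto intro: finite_subset\<close>)
  also have "\<dots> = Nchild E ts i"
    unfolding Nchild_def J_def using cf(2) by (intro sum.cong) (auto simp: distinct_card)
  finally have cB': "card B = Nchild E ts i" .
  show ?thesis unfolding deg_def eq using card_Un_disjoint[OF fA fB AB] cB' by (simp add: A_def)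
qed

definition Mg :: "'a set set \<Rightarrow> real \<Rightarrow> real \<Rightarrow> 'a \<Rightarrow> 'a \<Rightarrow> real" where
  "Mg Ed y t u v = (if u = v then y else 0) - ((if {u, v} \<in> Ed then 1 else 0) - t * (if u = v then real (deg Ed u) else 0))"

lemma phi_graph_matL:
  fixes V :: "'a::linorder set"
  assumes "finite V"
  shows "phi_graph V Ed x t = det (matL (sorted_list_of_set V) (Mg Ed x t))"
proof -
  define vs where "vs = sorted_list_of_set V"
  have d: "distinct vs" by (simp add: vs_def)
  define n where "n = length vs"
  have eq: "x \<cdot>\<^sub>m 1\<^sub>m n - (mat n n (\<lambda>(i, j). if {vs ! i, vs ! j} \<in> Ed then 1 else 0) -
      t \<cdot>\<^sub>m mat n n (\<lambda>(i, j). if i = j then real (deg Ed (vs ! i)) else 0)) = matL vs (Mg Ed x t)"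
  proof (rule eq_matI)
    fix i j assume "i < dim_row (matL vs (Mg Ed x t))" "j < dim_col (matL vs (Mg Ed x t))"
    hence ij: "i < n" "j < n" by (auto simp: matL_def n_def)
    have "vs ! i = vs ! j \<longleftrightarrow> i = j" using d ij by (simp add: nth_eq_iff_index_eq n_def)
    thus "(x \<cdot>\<^sub>m 1\<^sub>m n - (mat n n (\<lambda>(i, j). if {vs ! i, vs ! j} \<in> Ed then 1 else 0) -
      t \<cdot>\<^sub>m mat n n (\<lambda>(i, j). if i = j then real (deg Ed (vs ! i)) else 0))) $$ (i, j) = matL vs (Mg Ed x t) $$ (i, j)"
      using ij by (simp add: matL_def Mg_def n_def)
  qed (auto simp: matL_def n_def)
  show ?thesis unfolding phi_graph_def Let_def vs_def[symmetric] n_def[symmetric] eq ..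
qed

lemma phi_graph_distinct:
  fixes vs :: "'a::linorder list"
  assumes "distinct vs"
  shows "phi_graph (set vs) Ed x t = det (matL vs (Mg Ed x t))"
proof -
  have "mset (sorted_list_of_set (set vs)) = mset vs"
    using assms by (simp add: sorted_list_of_set_sort_remdups distinct_remdups_id)
  hence "det (matL (sorted_list_of_set (set vs)) (Mg Ed x t)) = det (matL vs (Mg Ed x t))"
    by (rule det_matL_perm)
  thus ?thesis using phi_graph_matL[of "set vs" Ed x t] by simp
qed

lemma matL_cong: "(\<And>u v. u \<in> set vs \<Longrightarrow> v \<in> set vs \<Longrightarrow> e u v = e' u v) \<Longrightarrow> matL vs e = matL vs e'"
  by (auto simp: matL_def intro!: eq_matI)

lemma matL_Inl: "matL (map Inl vs) (ebl blk M cc s nn) = matL vs M"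
  by (auto simp: matL_def intro!: eq_matI)

lemma reg_eq: "V \<noteq> {} \<Longrightarrow> regular V Ed r \<Longrightarrow> reg V Ed = r"
  unfolding reg_def by (rule the_equality) (auto simp: regular_def)

lemma treg_Leaf[simp]: "treg (Leaf a) = 0"
  unfolding treg_def by (rule reg_eq) (auto simp: regular_def deg_def)

lemma map_nth_upt: "map (\<lambda>i. f (xs ! i)) [0..<length xs] = map f xs"
  by (rule nth_equalityI) auto

lemma sum_ind_card: "finite A \<Longrightarrow> (\<Sum>v\<in>A. if P v then 1 else 0) = real (card {v\<in>A. P v})"
  by (simp add: sum.inter_filter[symmetric])

lemma node_block:
  fixes ts :: "'a::linorder stree list"
  assumes wf: "wf_conn (Node E ts)" and d: "distinct (leaves (Node E ts))"
    and creg: "\<forall>i<length ts. \<forall>u\<in>set (leaves (ts ! i)). deg (compose (ts ! i)) u = treg (ts ! i)"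
    and sne: "\<forall>i<length ts. length (leaves (ts ! i)) \<noteq> 1 \<longrightarrow>
        y + t * real (Nchild E ts i) - real (treg (ts ! i)) + t * real (treg (ts ! i)) \<noteq> 0"
  shows "phi_graph (set (leaves (Node E ts))) (compose (Node E ts)) y t =
    (\<Prod>i\<in>{0..<length ts}. if length (leaves (ts ! i)) = 1 then 1 else
        phi_graph (set (leaves (ts ! i))) (compose (ts ! i)) (y + t * real (Nchild E ts i)) t /
        (y + t * real (Nchild E ts i) - real (treg (ts ! i)) + t * real (treg (ts ! i)))) * phi_node E ts y t"
proof -
  note cf = child_facts[OF wf d]
  define k where "k = length ts"
  define bl where "bl = (\<lambda>i. leaves (ts ! i))"
  define blk where "blk = (\<lambda>u. SOME i. i < k \<and> u \<in> set (bl i))"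
  define M where "M = Mg (compose (Node E ts)) y t"
  define cc :: "nat \<Rightarrow> nat \<Rightarrow> real" where "cc = (\<lambda>i j. - (if {i, j} \<in> E then 1 else 0))"
  define sf where "sf = (\<lambda>i. y + t * real (Nchild E ts i) - real (treg (ts ! i)) + t * real (treg (ts ! i)))"
  define e where "e = ebl blk M cc sf (\<lambda>i. length (bl i))"
  have ne: "\<forall>i<k. bl i \<noteq> []" unfolding bl_def k_def using cf(1) leaves_ne by blast
  have dist: "\<forall>i<k. distinct (bl i)" using cf(2) by (simp add: bl_def k_def)
  have blk: "\<forall>i<k. \<forall>u\<in>set (bl i). blk u = i"
  proof (intro allI impI ballI)
    fix i u assume i: "i < k" and u: "u \<in> set (bl i)"
    show "blk u = i" unfolding blk_def
    proof (rule some_equality)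
      show "i < k \<and> u \<in> set (bl i)" using i u by simp
      fix j assume "j < k \<and> u \<in> set (bl j)"
      thus "j = i" using cf(4)[of j i u] i u by (simp add: bl_def k_def)
    qed
  qed
  have Mc: "M u v = Mg (compose (ts ! i)) (y + t * real (Nchild E ts i)) t u v"
    if i: "i < k" and u: "u \<in> set (bl i)" and v: "v \<in> set (bl i)" for i u v
  proof -
    have ie: "{u, v} \<in> compose (Node E ts) \<longleftrightarrow> {u, v} \<in> compose (ts ! i)"
      using inner_edge[OF wf d, of i u v] i u v by (simp add: bl_def k_def)
    have dg: "deg (compose (Node E ts)) u = deg (compose (ts ! i)) u + Nchild E ts i"
      using deg_child[OF wf d, of i u] i u by (simp add: bl_def k_def)
    show ?thesis unfolding M_def Mg_def ie dg by (simp add: algebra_simps)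
  qed
  have rsum: "\<forall>i<k. \<forall>u\<in>set (bl i). (\<Sum>v\<in>set (bl i). M u v) = sf i"
  proof (intro allI impI ballI)
    fix i u assume i: "i < k" and u: "u \<in> set (bl i)"
    have ik: "i < length ts" using i by (simp add: k_def)
    have uu: "u \<in> set (leaves (ts ! i))" using u by (simp add: bl_def)
    have dg: "deg (compose (Node E ts)) u = treg (ts ! i) + Nchild E ts i"
      using deg_child[OF wf d ik uu] creg ik uu by simp
    have Mu: "M u v = (if u = v then y + t * real (deg (compose (Node E ts)) u) else 0) -
        (if {u, v} \<in> compose (Node E ts) then 1 else 0)" for v
      by (simp add: M_def Mg_def)
    have fin: "finite (set (bl i))" by simp
    have "(\<Sum>v\<in>set (bl i). M u v) = (\<Sum>v\<in>set (bl i). (if u = v then y + t * real (deg (compose (Node E ts)) u) else 0)) -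
        (\<Sum>v\<in>set (bl i). (if {u, v} \<in> compose (Node E ts) then 1 else 0))"
      unfolding Mu by (simp add: sum_subtractf)
    also have "(\<Sum>v\<in>set (bl i). (if u = v then y + t * real (deg (compose (Node E ts)) u) else 0)) =
        y + t * real (deg (compose (Node E ts)) u)"
      using u fin by (simp add: sum.delta)
    also have "(\<Sum>v\<in>set (bl i). (if {u, v} \<in> compose (Node E ts) then 1 else 0)) =
        real (card {v\<in>set (bl i). {u, v} \<in> compose (Node E ts)})"
      using fin by (rule sum_ind_card)
    also have "{v\<in>set (bl i). {u, v} \<in> compose (Node E ts)} = {w. {w, u} \<in> compose (ts ! i)}"
    proof (rule Set.set_eqI)
      fix w
      show "w \<in> {v\<in>set (bl i). {u, v} \<in> compose (Node E ts)} \<longleftrightarrow> w \<in> {w. {w, u} \<in> compose (ts ! i)}"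
        using inner_edge[OF wf d ik uu, of w] nbrs_child[OF wf d ik uu]
        by (auto simp: bl_def insert_commute)
    qed
    also have "card {w. {w, u} \<in> compose (ts ! i)} = treg (ts ! i)"
      using creg ik uu by (simp add: deg_def)
    finally show "(\<Sum>v\<in>set (bl i). M u v) = sf i" unfolding dg by (simp add: sf_def algebra_simps)
  qed
  have off: "\<forall>i<k. \<forall>j<k. i \<noteq> j \<longrightarrow> (\<forall>u\<in>set (bl i). \<forall>v\<in>set (bl j). M u v = cc i j)"
  proof (intro allI impI ballI)
    fix i j u v assume i: "i < k" and j: "j < k" and ij: "i \<noteq> j" and u: "u \<in> set (bl i)" and v: "v \<in> set (bl j)"
    have "u \<noteq> v" using cf(3)[of i j] i j ij u v by (auto simp: bl_def k_def)
    moreover have "{u, v} \<in> compose (Node E ts) \<longleftrightarrow> {i, j} \<in> E"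
      using cross_edge[OF wf d, of i j u v] i j ij u v by (simp add: bl_def k_def)
    ultimately show "M u v = cc i j" by (simp add: M_def Mg_def cc_def)
  qed
  have sne': "\<forall>i<k. length (bl i) \<noteq> 1 \<longrightarrow> sf i \<noteq> 0" using sne by (simp add: bl_def k_def sf_def)
  from block_iter[of k bl blk M sf cc 0, OF ne dist blk rsum off sne']
  have it: "det (matL (concat (map (\<lambda>i. map Inl (bl i)) [0..<k])) e) =
     (\<Prod>i\<in>{0..<k}. if length (bl i) = 1 then 1 else det (matL (map Inl (bl i)) e) / sf i) *
     det (matL (map Inr [0..<k]) e)" unfolding e_def by simp
  have lhs: "concat (map (\<lambda>i. map Inl (bl i)) [0..<k]) = map Inl (leaves (Node E ts))"
  proof -
    have "map (\<lambda>i. map Inl (bl i)) [0..<k] = map (\<lambda>c. map Inl (leaves c)) ts"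
      unfolding bl_def k_def by (rule map_nth_upt)
    hence "concat (map (\<lambda>i. map Inl (bl i)) [0..<k]) = concat (map (\<lambda>c. map Inl (leaves c)) ts)" by (rule arg_cong)
    also have "\<dots> = map Inl (leaves (Node E ts))" by (simp add: map_concat comp_def)
    finally show ?thesis .
  qed
  have dL: "det (matL (concat (map (\<lambda>i. map Inl (bl i)) [0..<k])) e) = phi_graph (set (leaves (Node E ts))) (compose (Node E ts)) y t"
    unfolding lhs e_def matL_Inl using phi_graph_distinct[OF d] by (simp add: M_def)
  have dB: "det (matL (map Inl (bl i)) e) = phi_graph (set (leaves (ts ! i))) (compose (ts ! i)) (y + t * real (Nchild E ts i)) t"
    if i: "i < k" for i
  proof -
    have "matL (map Inl (bl i)) e = matL (bl i) M" by (simp add: e_def matL_Inl)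
    also have "\<dots> = matL (bl i) (Mg (compose (ts ! i)) (y + t * real (Nchild E ts i)) t)"
      by (rule matL_cong) (rule Mc[OF i])
    finally show ?thesis using phi_graph_distinct[of "bl i"] dist i by (simp add: bl_def)
  qed
  have dQ: "det (matL (map Inr [0..<k]) e) = phi_node E ts y t"
  proof -
    define Q where "Q = matL (map Inr [0..<k]) e"
    have Qc: "Q \<in> carrier_mat k k" using matL_carrier[of "map Inr [0..<k]" e] by (simp add: Q_def)
    define a where "a = (\<lambda>i. sqrt (real (length (bl i))))"
    have apos: "a i \<noteq> 0" if "i < k" for i using ne that by (simp add: a_def)
    have mq: "y \<cdot>\<^sub>m 1\<^sub>m k - (node_A E ts - t \<cdot>\<^sub>m node_D E ts) = mat k k (\<lambda>(i, j). a i * Q $$ (i, j) / a j)"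
    proof (rule eq_matI)
      fix i j assume "i < dim_row (mat k k (\<lambda>(i, j). a i * Q $$ (i, j) / a j))" "j < dim_col (mat k k (\<lambda>(i, j). a i * Q $$ (i, j) / a j))"
      hence ij: "i < k" "j < k" by auto
      have Qij: "Q $$ (i, j) = (if i = j then sf i else cc i j * real (length (bl j)))"
        using ij by (simp add: Q_def matL_def e_def)
      show "(y \<cdot>\<^sub>m 1\<^sub>m k - (node_A E ts - t \<cdot>\<^sub>m node_D E ts)) $$ (i, j) = mat k k (\<lambda>(i, j). a i * Q $$ (i, j) / a j) $$ (i, j)"
      proof (cases "i = j")
        case True
        thus ?thesis using ij apos[OF ij(1)] Qij
          by (simp add: node_A_def node_D_def k_def sf_def algebra_simps)
      next
        case False
        have nj: "0 < real (length (bl j))" using ne ij by simp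
        have "a i * (real (length (bl j))) / a j = sqrt (real (length (leaves (ts ! i))) * real (length (leaves (ts ! j))))"
        proof -
          have q: "real (length (bl j)) / sqrt (real (length (bl j))) = sqrt (real (length (bl j)))"
            by (rule real_div_sqrt) simp
          have "a i * (real (length (bl j))) / a j = a i * (real (length (bl j)) / a j)" by simp
          also have "\<dots> = a i * sqrt (real (length (bl j)))" using q by (simp add: a_def)
          finally show ?thesis by (simp add: a_def real_sqrt_mult bl_def)
        qed
        thus ?thesis using ij False Qij
          by (simp add: node_A_def node_D_def k_def cc_def)
      qed
    qed (auto simp: node_A_def node_D_def k_def)
    have "phi_node E ts y t = det (mat k k (\<lambda>(i, j). a i * Q $$ (i, j) / a j))"
      unfolding phi_node_def k_def[symmetric] mq ..
    also have "\<dots> = det Q" by (rule det_diag_scale[OF Qc apos])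
    finally show ?thesis by (simp add: Q_def)
  qed
  have pr: "(\<Prod>i\<in>{0..<k}. if length (bl i) = 1 then 1 else det (matL (map Inl (bl i)) e) / sf i) =
    (\<Prod>i\<in>{0..<length ts}. if length (leaves (ts ! i)) = 1 then 1 else
        phi_graph (set (leaves (ts ! i))) (compose (ts ! i)) (y + t * real (Nchild E ts i)) t /
        (y + t * real (Nchild E ts i) - real (treg (ts ! i)) + t * real (treg (ts ! i))))"
  proof (rule prod.cong)
    show "{0..<k} = {0..<length ts}" by (simp add: k_def)
  next
    fix i assume "i \<in> {0..<length ts}"
    hence i: "i < k" by (simp add: k_def)
    show "(if length (bl i) = 1 then 1 else det (matL (map Inl (bl i)) e) / sf i) =
      (if length (leaves (ts ! i)) = 1 then 1 else
        phi_graph (set (leaves (ts ! i))) (compose (ts ! i)) (y + t * real (Nchild E ts i)) t /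
        (y + t * real (Nchild E ts i) - real (treg (ts ! i)) + t * real (treg (ts ! i))))"
      using dB[OF i] by (simp add: bl_def sf_def)
  qed
  show ?thesis using it dL pr dQ by simp
qed

lemma phi_graph_single: "phi_graph {a::'a::linorder} {} y t = y"
proof -
  have "phi_graph (set [a]) {} y t = det (matL [a] (Mg {} y t))" by (rule phi_graph_distinct) simp
  also have "\<dots> = y" by (subst det_single) (auto simp: matL_def Mg_def deg_def)
  finally show ?thesis by simp
qed

lemma child_deg_treg:
  assumes wf: "wf_conn c" and r: "c = Leaf a \<or> (\<exists>r. regular (set (leaves c)) (compose c) r)"
    and u: "u \<in> set (leaves c)"
  shows "deg (compose c) u = treg c"
  using r
proof
  assume "c = Leaf a" thus ?thesis by (simp add: deg_def)
next
  assume "\<exists>r. regular (set (leaves c)) (compose c) r"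
  then obtain r where r: "regular (set (leaves c)) (compose c) r" by blast
  have "treg c = r" unfolding treg_def using leaves_ne[OF wf] r by (intro reg_eq) auto
  thus ?thesis using r u by (simp add: regular_def)
qed

lemma main_gen:
  fixes s :: "'a::linorder stree"
  shows "wf_conn s \<Longrightarrow> distinct (leaves s) \<Longrightarrow>
    (\<forall>p\<in>internal s. p \<noteq> [] \<longrightarrow> (\<exists>r. regular (set (leaves (the (subt s p)))) (compose (the (subt s p))) r)) \<Longrightarrow>
    (\<forall>p\<in>internal s. p \<noteq> [] \<longrightarrow> y - real (rw s p) + t * (real (rw s p) + real (Nrw s p)) \<noteq> 0) \<Longrightarrow>
    phi_graph (set (leaves s)) (compose s) y t =
      (\<Prod>p\<in>internal s - {[]}. phi_at s p (y + t * real (Nrw s p)) t /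
          (y - real (rw s p) + t * (real (rw s p) + real (Nrw s p)))) *
      (case s of Leaf a \<Rightarrow> y | Node E ts \<Rightarrow> phi_node E ts y t)"
proof (induction s arbitrary: y)
  case (Leaf a)
  thus ?case using phi_graph_single by simp
next
  case (Node E ts)
  define k where "k = length ts"
  define Nn where "Nn = (\<lambda>i. real (Nchild E ts i))"
  note cf = child_facts[OF Node.prems(1,2)]
  have wfc: "\<And>i. i < k \<Longrightarrow> wf_conn (ts ! i)" using cf(1) by (simp add: k_def)
  have dc: "\<And>i. i < k \<Longrightarrow> distinct (leaves (ts ! i))" using cf(2) by (simp add: k_def)
  have intc: "\<And>i p. i < k \<Longrightarrow> p \<in> internal (ts ! i) \<Longrightarrow> i # p \<in> internal (Node E ts)"
    by (auto simp: internal_Node k_def)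
  have subtc: "\<And>i p. i < k \<Longrightarrow> subt (Node E ts) (i # p) = subt (ts ! i) p" by (simp add: k_def)
  define g where "g = (\<lambda>i p. phi_at (ts ! i) p (y + t * Nn i + t * real (Nrw (ts ! i) p)) t /
          (y + t * Nn i - real (rw (ts ! i) p) + t * (real (rw (ts ! i) p) + real (Nrw (ts ! i) p))))"
  define dd where "dd = (\<lambda>i. y + t * Nn i - real (treg (ts ! i)) + t * real (treg (ts ! i)))"
  have child: "(\<Prod>p\<in>internal (ts ! i). g i p) = (if length (leaves (ts ! i)) = 1 then 1 else
        phi_graph (set (leaves (ts ! i))) (compose (ts ! i)) (y + t * Nn i) t / dd i)" if i: "i < k" for i
  proof (cases "ts ! i")
    case (Leaf a)
    thus ?thesis by simp
  next
    case (Node E' ts')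
    have len: "length (leaves (ts ! i)) \<noteq> 1" using leaves_len_ge2[of E' ts'] wfc[OF i] Node by simp
    have mem: "ts ! i \<in> set ts" using i by (simp add: k_def)
    have IH: "phi_graph (set (leaves (ts ! i))) (compose (ts ! i)) (y + t * Nn i) t =
      (\<Prod>p\<in>internal (ts ! i) - {[]}. phi_at (ts ! i) p (y + t * Nn i + t * real (Nrw (ts ! i) p)) t /
          (y + t * Nn i - real (rw (ts ! i) p) + t * (real (rw (ts ! i) p) + real (Nrw (ts ! i) p)))) *
      (case ts ! i of Leaf a \<Rightarrow> y + t * Nn i | Node E ts \<Rightarrow> phi_node E ts (y + t * Nn i) t)"
    proof (rule Node.IH[OF mem wfc[OF i] dc[OF i]])
      show "\<forall>p\<in>internal (ts ! i). p \<noteq> [] \<longrightarrow> (\<exists>r. regular (set (leaves (the (subt (ts ! i) p)))) (compose (the (subt (ts ! i) p))) r)"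
        using Node.prems(3) intc[OF i] subtc[OF i] by fastforce
      show "\<forall>p\<in>internal (ts ! i). p \<noteq> [] \<longrightarrow> y + t * Nn i - real (rw (ts ! i) p) + t * (real (rw (ts ! i) p) + real (Nrw (ts ! i) p)) \<noteq> 0"
      proof (intro ballI impI)
        fix p assume p: "p \<in> internal (ts ! i)" "p \<noteq> []"
        have "y - real (rw (Node E ts) (i # p)) + t * (real (rw (Node E ts) (i # p)) + real (Nrw (Node E ts) (i # p))) \<noteq> 0"
          using Node.prems(4) intc[OF i p(1)] by blast
        thus "y + t * Nn i - real (rw (ts ! i) p) + t * (real (rw (ts ! i) p) + real (Nrw (ts ! i) p)) \<noteq> 0"
          using i by (simp add: rw_Cons Nrw_Cons k_def Nn_def algebra_simps)
      qed
    qed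
    have int0: "[] \<in> internal (ts ! i)" using Node by (simp add: internal_def)
    have "(\<Prod>p\<in>internal (ts ! i). g i p) = g i [] * (\<Prod>p\<in>internal (ts ! i) - {[]}. g i p)"
      by (rule prod.remove[OF finite_internal int0])
    also have "g i [] = phi_node E' ts' (y + t * Nn i) t / dd i"
      using Node by (simp add: g_def dd_def phi_at_def rw_def)
    finally show ?thesis using IH len Node by (simp add: g_def)
  qed
  have decomp: "internal (Node E ts) - {[]} = (\<Union>i\<in>{0..<k}. (Cons i) ` internal (ts ! i))"
    by (auto simp: internal_Node k_def)
  define F where "F = (\<lambda>p. phi_at (Node E ts) p (y + t * real (Nrw (Node E ts) p)) t /
          (y - real (rw (Node E ts) p) + t * (real (rw (Node E ts) p) + real (Nrw (Node E ts) p))))"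
  have "(\<Prod>p\<in>internal (Node E ts) - {[]}. F p) = (\<Prod>i\<in>{0..<k}. \<Prod>p\<in>(Cons i) ` internal (ts ! i). F p)"
    unfolding decomp by (rule prod.UNION_disjoint) (auto simp: finite_internal)
  also have "\<dots> = (\<Prod>i\<in>{0..<k}. \<Prod>p\<in>internal (ts ! i). g i p)"
  proof (rule prod.cong[OF refl])
    fix i assume "i \<in> {0..<k}"
    hence i: "i < k" by simp
    have "(\<Prod>p\<in>(Cons i) ` internal (ts ! i). F p) = (\<Prod>p\<in>internal (ts ! i). F (i # p))"
      by (subst prod.reindex) auto
    also have "\<dots> = (\<Prod>p\<in>internal (ts ! i). g i p)"
      using i by (intro prod.cong[OF refl]) (simp add: F_def g_def phi_at_Cons rw_Cons Nrw_Cons k_def Nn_def algebra_simps)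
    finally show "(\<Prod>p\<in>(Cons i) ` internal (ts ! i). F p) = (\<Prod>p\<in>internal (ts ! i). g i p)" .
  qed
  also have "\<dots> = (\<Prod>i\<in>{0..<k}. if length (leaves (ts ! i)) = 1 then 1 else
        phi_graph (set (leaves (ts ! i))) (compose (ts ! i)) (y + t * Nn i) t / dd i)"
    by (rule prod.cong[OF refl]) (simp add: child)
  finally have P: "(\<Prod>p\<in>internal (Node E ts) - {[]}. F p) = \<dots>" .
  have creg: "\<forall>i<length ts. \<forall>u\<in>set (leaves (ts ! i)). deg (compose (ts ! i)) u = treg (ts ! i)"
  proof (intro allI impI ballI)
    fix i u assume i: "i < length ts" and u: "u \<in> set (leaves (ts ! i))"
    have "(\<exists>a. ts ! i = Leaf a) \<or> (\<exists>r. regular (set (leaves (ts ! i))) (compose (ts ! i)) r)"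
    proof (cases "ts ! i")
      case (Leaf a) thus ?thesis by simp
    next
      case (Node E' ts')
      hence "[i] \<in> internal (Node E ts)" using i by (simp add: internal_def)
      thus ?thesis using Node.prems(3) i by fastforce
    qed
    thus "deg (compose (ts ! i)) u = treg (ts ! i)"
      using child_deg_treg[OF cf(1)[OF i] _ u] by blast
  qed
  have sne: "\<forall>i<length ts. length (leaves (ts ! i)) \<noteq> 1 \<longrightarrow>
        y + t * real (Nchild E ts i) - real (treg (ts ! i)) + t * real (treg (ts ! i)) \<noteq> 0"
  proof (intro allI impI)
    fix i assume i: "i < length ts" and l: "length (leaves (ts ! i)) \<noteq> 1"
    have "[i] \<in> internal (Node E ts)"
    proof (cases "ts ! i")
      case (Leaf a) thus ?thesis using l by simp
    next
      case (Node E' ts') thus ?thesis using i by (simp add: internal_def)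
    qed
    hence "y - real (rw (Node E ts) [i]) + t * (real (rw (Node E ts) [i]) + real (Nrw (Node E ts) [i])) \<noteq> 0"
      using Node.prems(4) by blast
    thus "y + t * real (Nchild E ts i) - real (treg (ts ! i)) + t * real (treg (ts ! i)) \<noteq> 0"
      using i Nrw_Cons[OF i, of E "[]"] by (simp add: rw_def algebra_simps)
  qed
  have NB: "phi_graph (set (leaves (Node E ts))) (compose (Node E ts)) y t =
    (\<Prod>i\<in>{0..<length ts}. if length (leaves (ts ! i)) = 1 then 1 else
        phi_graph (set (leaves (ts ! i))) (compose (ts ! i)) (y + t * real (Nchild E ts i)) t /
        (y + t * real (Nchild E ts i) - real (treg (ts ! i)) + t * real (treg (ts ! i)))) * phi_node E ts y t"
    by (rule node_block[OF Node.prems(1,2) creg sne])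
  have P2: "(\<Prod>i\<in>{0..<k}. if length (leaves (ts ! i)) = 1 then 1 else
        phi_graph (set (leaves (ts ! i))) (compose (ts ! i)) (y + t * Nn i) t / dd i) =
    (\<Prod>i\<in>{0..<length ts}. if length (leaves (ts ! i)) = 1 then 1 else
        phi_graph (set (leaves (ts ! i))) (compose (ts ! i)) (y + t * real (Nchild E ts i)) t /
        (y + t * real (Nchild E ts i) - real (treg (ts ! i)) + t * real (treg (ts ! i))))"
    unfolding Nn_def dd_def k_def by (rule refl)
  have "phi_graph (set (leaves (Node E ts))) (compose (Node E ts)) y t =
     (\<Prod>p\<in>internal (Node E ts) - {[]}. F p) * phi_node E ts y t"
    unfolding NB P P2 ..
  thus ?case by (simp add: F_def)
qed

theorem mainTheorem10:
  fixes L :: "'a::linorder set" and T :: "'a stree" and x t :: real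
  assumes "finite L" and "card L \<ge> 2"
    and "wf_conn T"
    and "leaves T = sorted_list_of_set L"
    and "\<forall>p\<in>internal T. p \<noteq> [] \<longrightarrow>
           (\<exists>r. regular (set (leaves (the (subt T p)))) (compose (the (subt T p))) r)"
    and "\<forall>p\<in>internal T. p \<noteq> [] \<longrightarrow>
           x - real (rw T p) + t * (real (rw T p) + real (Nrw T p)) \<noteq> 0"
  shows "phi_graph L (compose T) x t =
    (\<Prod>p\<in>internal T - {[]}.
        phi_at T p (x + t * real (Nrw T p)) t /
        (x - real (rw T p) + t * (real (rw T p) + real (Nrw T p)))) * phi_at T [] x t"
proof -
  have sL: "set (leaves T) = L" using assms(1,4) by simp
  have d: "distinct (leaves T)" using assms(4) by simp
  obtain E ts where T: "T = Node E ts"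
  proof (cases T)
    case (Leaf a)
    hence "L = {a}" using sL by simp
    thus ?thesis using assms(2) by simp
  next
    case (Node E ts) thus ?thesis using that by blast
  qed
  have "phi_graph (set (leaves T)) (compose T) x t =
      (\<Prod>p\<in>internal T - {[]}. phi_at T p (x + t * real (Nrw T p)) t /
          (x - real (rw T p) + t * (real (rw T p) + real (Nrw T p)))) *
      (case T of Leaf a \<Rightarrow> x | Node E ts \<Rightarrow> phi_node E ts x t)"
    by (rule main_gen[OF assms(3) d assms(5) assms(6)])
  moreover have "phi_at T [] x t = (case T of Leaf a \<Rightarrow> x | Node E ts \<Rightarrow> phi_node E ts x t)"
    using T by (simp add: phi_at_def)
  ultimately show ?thesis using sL by simp
qed

end
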